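(* Let $P$ be a finite partial IP loop. Then $\#\Gamma(P)\equiv(\#P-1)(\#P-2)-o_3(P)\pmod 6$.
   Context: A partial IP loop is a set $P$ with a partial binary operation $(x,y)\mapsto xy$ defined on a subset $D(P)\subseteq P\times P$ (the domain) such that: (1) there is $1\in P$ with $(1,x),(x,1)\in D(P)$ and $1x=x1=x$ for all $x\in P$; (2) for each $x\in P$ there is a unique $y\in P$, denoted $x^{-1}$, with $(x,y),(y,x)\in D(P)$ and $xy=yx=1$; (3) whenever $(x,y)\in D(P)$, we have $(x^{-1},xy),(xy,y^{-1})\in D(P)$ and $x^{-1}(xy)=y$, $(xy)y^{-1}=x$. The set of gaps is $\Gamma(P)=(P\times P)\setminus D(P)$. $O_3(P)=\{x\in P: (x,x)\in D(P),\ (x,xx)\in D(P),\ x\neq 1,\ x(xx)=1\}$ and $o_3(P)=\#O_3(P)$; $\#A$ denotes the cardinality of a finite set $A$. *)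

theory Defs
  imports "HOL-Number_Theory.Cong"
begin

text \<open>A partial IP loop: carrier P, domain D \<subseteq> P \<times> P, multiplication m (meaningful on D), unit e.\<close>

definition pinv :: "'a set \<Rightarrow> ('a \<times> 'a) set \<Rightarrow> ('a \<Rightarrow> 'a \<Rightarrow> 'a) \<Rightarrow> 'a \<Rightarrow> 'a \<Rightarrow> 'a" where
  "pinv P D m e x = (THE y. y \<in> P \<and> (x, y) \<in> D \<and> (y, x) \<in> D \<and> m x y = e \<and> m y x = e)"

definition partial_IP_loop :: "'a set \<Rightarrow> ('a \<times> 'a) set \<Rightarrow> ('a \<Rightarrow> 'a \<Rightarrow> 'a) \<Rightarrow> 'a \<Rightarrow> bool" where
  "partial_IP_loop P D m e \<longleftrightarrow>
     D \<subseteq> P \<times> P \<and>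
     (\<forall>(x, y) \<in> D. m x y \<in> P) \<and>
     e \<in> P \<and>
     (\<forall>x \<in> P. (e, x) \<in> D \<and> (x, e) \<in> D \<and> m e x = x \<and> m x e = x) \<and>
     (\<forall>x \<in> P. \<exists>!y. y \<in> P \<and> (x, y) \<in> D \<and> (y, x) \<in> D \<and> m x y = e \<and> m y x = e) \<and>
     (\<forall>(x, y) \<in> D.
        (pinv P D m e x, m x y) \<in> D \<and> (m x y, pinv P D m e y) \<in> D \<and>
        m (pinv P D m e x) (m x y) = y \<and> m (m x y) (pinv P D m e y) = x)"

definition gaps :: "'a set \<Rightarrow> ('a \<times> 'a) set \<Rightarrow> ('a \<times> 'a) set" where
  "gaps P D = (P \<times> P) - D"

definition O3 :: "'a set \<Rightarrow> ('a \<times> 'a) set \<Rightarrow> ('a \<Rightarrow> 'a \<Rightarrow> 'a) \<Rightarrow> 'a \<Rightarrow> 'a set" where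
  "O3 P D m e = {x \<in> P. (x, x) \<in> D \<and> (x, m x x) \<in> D \<and> x \<noteq> e \<and> m x (m x x) = e}"

definition o3 :: "'a set \<Rightarrow> ('a \<times> 'a) set \<Rightarrow> ('a \<Rightarrow> 'a \<Rightarrow> 'a) \<Rightarrow> 'a \<Rightarrow> nat" where
  "o3 P D m e = card (O3 P D m e)"

end

theory Submission
  imports Defs
begin

lemma inv2_cong:
  assumes "finite A"
  shows "(\<forall>x\<in>A. f x \<in> A \<and> f (f x) = x) \<Longrightarrow> [card A = card {x\<in>A. f x = x}] (mod 2)"
  using assms
proof (induction A rule: finite_psubset_induct)
  case (psubset A)
  show ?case
  proof (cases "\<exists>x\<in>A. f x \<noteq> x")
    case False then have "{x\<in>A. f x = x} = A" by auto
    then show ?thesis by simp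
  next
    case True
    then obtain x where x: "x\<in>A" "f x \<noteq> x" by auto
    define B where "B = A - {x, f x}"
    have sub: "B \<subset> A" using x unfolding B_def by auto
    have fx: "f (f x) = x" using psubset.prems x by auto
    have inv: "\<forall>y\<in>B. f y \<in> B \<and> f (f y) = y"
    proof
      fix y assume y: "y \<in> B"
      then have yA: "y \<in> A" "y \<noteq> x" "y \<noteq> f x" by (auto simp: B_def)
      have fy: "f y \<in> A" "f (f y) = y" using psubset.prems yA by auto
      have "f y \<noteq> x" using fy yA by auto
      moreover have "f y \<noteq> f x" using fy yA fx by metis
      ultimately show "f y \<in> B \<and> f (f y) = y" using fy by (auto simp: B_def)
    qed
    have IH: "[card B = card {y\<in>B. f y = y}] (mod 2)" using psubset.IH[OF sub inv] .
    have fixeq: "{y\<in>B. f y = y} = {y\<in>A. f y = y}" using x psubset.prems unfolding B_def by auto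
    have "card A = card B + 2"
    proof -
      have "{x, f x} \<subseteq> A" using x psubset.prems by auto
      moreover have "card {x, f x} = 2" using x by auto
      ultimately show ?thesis unfolding B_def using psubset.hyps
        by (metis add.commute card_Diff_subset card_mono finite_subset le_add_diff_inverse)
    qed
    then show ?thesis using IH fixeq unfolding cong_def by simp
  qed
qed

lemma inv3_cong:
  assumes "finite A"
  shows "(\<forall>x\<in>A. f x \<in> A \<and> f (f (f x)) = x) \<Longrightarrow> [card A = card {x\<in>A. f x = x}] (mod 3)"
  using assms
proof (induction A rule: finite_psubset_induct)
  case (psubset A)
  show ?case
  proof (cases "\<exists>x\<in>A. f x \<noteq> x")
    case False then have "{x\<in>A. f x = x} = A" by auto
    then show ?thesis by simp
  next
    case True
    then obtain x where x: "x\<in>A" "f x \<noteq> x" by auto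
    have x2: "f (f x) \<noteq> x" "f (f x) \<noteq> f x" using x psubset.prems by (metis, metis)
    define B where "B = A - {x, f x, f (f x)}"
    have sub: "B \<subset> A" using x unfolding B_def by auto
    have fx: "f (f (f x)) = x" using psubset.prems x by auto
    have inv: "\<forall>y\<in>B. f y \<in> B \<and> f (f (f y)) = y"
    proof
      fix y assume y: "y \<in> B"
      then have yA: "y \<in> A" "y \<noteq> x" "y \<noteq> f x" "y \<noteq> f (f x)" by (auto simp: B_def)
      have fy: "f y \<in> A" "f (f (f y)) = y" using psubset.prems yA by auto
      have "f y \<noteq> x" using fy yA fx by metis
      moreover have "f y \<noteq> f x" using fy yA fx by metis
      moreover have "f y \<noteq> f (f x)" using fy yA fx by metis
      ultimately show "f y \<in> B \<and> f (f (f y)) = y" using fy by (auto simp: B_def)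
    qed
    have IH: "[card B = card {y\<in>B. f y = y}] (mod 3)" using psubset.IH[OF sub inv] .
    have fixeq: "{y\<in>B. f y = y} = {y\<in>A. f y = y}" using x x2 psubset.prems unfolding B_def by auto
    have "card A = card B + 3"
    proof -
      have "{x, f x, f (f x)} \<subseteq> A" using x psubset.prems by auto
      moreover have "card {x, f x, f (f x)} = 3" using x x2 by auto
      ultimately show ?thesis unfolding B_def using psubset.hyps
        by (metis add.commute card_Diff_subset card_mono finite_subset le_add_diff_inverse)
    qed
    then show ?thesis using IH fixeq unfolding cong_def by simp
  qed
qed

lemma A1: assumes "[(d::nat) = n] (mod 2)" shows "int d mod 2 = int n mod 2"
proof -
  have "int (d mod 2) = int (n mod 2)" using assms by (simp add: cong_def)
  then show ?thesis by (simp add: of_nat_mod)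
qed
lemma A2: assumes "[(d::nat) = k+1] (mod 3)" shows "int d mod 3 = (int k + 1) mod 3"
proof -
  have "int (d mod 3) = int ((k+1) mod 3)" using assms by (simp add: cong_def)
  then show ?thesis by (simp add: of_nat_mod add.commute)
qed
lemma A3: assumes "[(k::nat) = 0] (mod 2)" shows "int k mod 2 = 0"
proof -
  have "int (k mod 2) = 0" using assms by (simp add: cong_def)
  then show ?thesis by (simp add: of_nat_mod)
qed
lemma A4:
  fixes a b c N :: int
  assumes "a mod 2 = b mod 2" "a mod 3 = (c + 1) mod 3" "c mod 2 = 0"
  shows "(N - a) mod 6 = (N - 3 * b + 2 - c) mod 6"
proof -
  have h1: "2 dvd (a - b)" using assms(1) mod_eq_dvd_iff by blast
  have h2: "3 dvd (a - (c+1))" using assms(2) mod_eq_dvd_iff by blast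
  have h3: "2 dvd c" using assms(3) by (simp add: dvd_eq_mod_eq_0)
  have e1: "a - 3*b + 2 - c = (a-b) + 2*(1-b) - c" by algebra
  have e2: "a - 3*b + 2 - c = (a-(c+1)) + 3*(1-b)" by algebra
  have g2: "2 dvd (a - 3*b + 2 - c)" unfolding e1
    by (rule dvd_diff[OF dvd_add[OF h1 dvd_triv_left] h3])
  have g3: "3 dvd (a - 3*b + 2 - c)" unfolding e2
    by (rule dvd_add[OF h2 dvd_triv_left])
  have "2 * 3 dvd (a - 3*b + 2 - c)" using g2 g3 by (intro divides_mult) auto
  moreover have "(N - a) - (N - 3 * b + 2 - c) = - (a - 3*b + 2 - c)" by algebra
  ultimately have "6 dvd ((N - a) - (N - 3 * b + 2 - c))" by (simp only: dvd_minus_iff) simp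
  then show ?thesis using mod_eq_dvd_iff by blast
qed

theorem lemma2:
  fixes P :: "'a set" and D :: "('a \<times> 'a) set" and m :: "'a \<Rightarrow> 'a \<Rightarrow> 'a" and e :: 'a
  assumes "partial_IP_loop P D m e" and "finite P"
  shows "[int (card (gaps P D)) = (int (card P) - 1) * (int (card P) - 2) - int (o3 P D m e)] (mod 6)"
proof -
  define I where "I = pinv P D m e"
  note L = assms(1)[unfolded partial_IP_loop_def, folded I_def]
  have DP: "D \<subseteq> P \<times> P" using L by blast
  have mP: "\<And>x y. (x,y) \<in> D \<Longrightarrow> m x y \<in> P" using L by blast
  have eP: "e \<in> P" using L by blast
  have unit: "\<And>x. x \<in> P \<Longrightarrow> (e, x) \<in> D \<and> (x, e) \<in> D \<and> m e x = x \<and> m x e = x" using L by blast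
  have ex1: "\<And>x. x \<in> P \<Longrightarrow> \<exists>!y. y \<in> P \<and> (x, y) \<in> D \<and> (y, x) \<in> D \<and> m x y = e \<and> m y x = e"
    using L by blast
  have ip: "\<And>x y. (x,y) \<in> D \<Longrightarrow> (I x, m x y) \<in> D \<and> (m x y, I y) \<in> D \<and>
        m (I x) (m x y) = y \<and> m (m x y) (I y) = x" using L by blast
  have Iprop: "\<And>x. x \<in> P \<Longrightarrow> I x \<in> P \<and> (x, I x) \<in> D \<and> (I x, x) \<in> D \<and> m x (I x) = e \<and> m (I x) x = e"
    unfolding I_def pinv_def by (rule theI', erule ex1)
  have Iuniq: "\<And>x y. x \<in> P \<Longrightarrow> y \<in> P \<Longrightarrow> (x, y) \<in> D \<Longrightarrow> (y, x) \<in> D \<Longrightarrow> m x y = e \<Longrightarrow> m y x = e \<Longrightarrow> I x = y"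
    unfolding I_def pinv_def by (rule the1_equality, erule ex1, blast)
  have II: "\<And>x. x \<in> P \<Longrightarrow> I (I x) = x"
    using Iprop Iuniq by blast
  have Ie: "I e = e" using Iuniq[OF eP eP] unit[OF eP] by blast
  have Lrot: "\<And>x y. (x,y) \<in> D \<Longrightarrow> (y, I (m x y)) \<in> D \<and> m y (I (m x y)) = I x"
  proof -
    fix x y assume xy: "(x,y) \<in> D"
    have a: "(I x, m x y) \<in> D" "m (I x) (m x y) = y" using ip[OF xy] by auto
    show "(y, I (m x y)) \<in> D \<and> m y (I (m x y)) = I x" using ip[OF a(1)] a(2) by auto
  qed
  have finD: "finite D" using DP assms(2) by (meson finite_SigmaI finite_subset)
  define n where "n = card P"
  define d where "d = card D"
  define k where "k = o3 P D m e"
  have gapcard: "card (gaps P D) = n * n - d" and dle: "d \<le> n * n"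
    unfolding gaps_def n_def d_def using DP assms(2) finD
    by (simp_all add: card_Diff_subset card_cartesian_product,
        metis card_cartesian_product card_mono finite_SigmaI)
  define sg where "sg = (\<lambda>p. (m (fst p) (snd p), I (snd p)))"
  have sg_inv: "\<forall>p\<in>D. sg p \<in> D \<and> sg (sg p) = p"
  proof
    fix p assume p: "p \<in> D"
    obtain x y where xy: "p = (x,y)" by fastforce
    have y: "y \<in> P" using p xy DP by auto
    show "sg p \<in> D \<and> sg (sg p) = p" using ip[of x y] p xy II[OF y] unfolding sg_def by auto
  qed
  have sg_fix: "{p\<in>D. sg p = p} = (\<lambda>x. (x, e)) ` P"
  proof (intro set_eqI iffI)
    fix p assume p: "p \<in> {p\<in>D. sg p = p}"
    obtain x y where xy: "p = (x,y)" by fastforce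
    have "m x y = x" using p xy unfolding sg_def by auto
    then have "y = m (I x) x" using ip[of x y] p xy by auto
    moreover have "x \<in> P" using p xy DP by auto
    ultimately have "y = e" using Iprop by auto
    then show "p \<in> (\<lambda>x. (x, e)) ` P" using xy \<open>x \<in> P\<close> by auto
  next
    fix p assume "p \<in> (\<lambda>x. (x, e)) ` P"
    then obtain x where "x \<in> P" "p = (x, e)" by auto
    then show "p \<in> {p\<in>D. sg p = p}" using unit Ie unfolding sg_def by auto
  qed
  have mod2: "[d = n] (mod 2)"
  proof -
    have "[d = card ((\<lambda>x. (x, e)) ` P)] (mod 2)" unfolding d_def using inv2_cong[OF finD sg_inv] sg_fix by simp
    moreover have "card ((\<lambda>x. (x, e)) ` P) = n" unfolding n_def by (rule card_image) (auto simp: inj_on_def)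
    ultimately show ?thesis by simp
  qed
  have O3c: "\<And>x. x \<in> O3 P D m e \<longleftrightarrow> x \<in> P \<and> x \<noteq> e \<and> (x,x) \<in> D \<and> m x x = I x"
  proof
    fix x assume x: "x \<in> O3 P D m e"
    then have xP: "x \<in> P" and xx: "(x,x) \<in> D" and xxx: "(x, m x x) \<in> D" and ne: "x \<noteq> e"
      and eq: "m x (m x x) = e" unfolding O3_def by auto
    have "m (I x) e = m x x" using ip[OF xxx] eq by auto
    moreover have "m (I x) e = I x" using unit Iprop xP by auto
    ultimately show "x \<in> P \<and> x \<noteq> e \<and> (x,x) \<in> D \<and> m x x = I x" using xP xx ne by auto
  next
    fix x assume "x \<in> P \<and> x \<noteq> e \<and> (x,x) \<in> D \<and> m x x = I x"
    then show "x \<in> O3 P D m e" using Iprop unfolding O3_def by auto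
  qed
  have keven: "[k = 0] (mod 2)"
  proof -
    have finO: "finite (O3 P D m e)" using assms(2) unfolding O3_def by auto
    have invO: "\<forall>x\<in>O3 P D m e. I x \<in> O3 P D m e \<and> I (I x) = x"
    proof
      fix x assume x: "x \<in> O3 P D m e"
      then have xP: "x \<in> P" and ne: "x \<noteq> e" and xx: "(x,x) \<in> D" and eq: "m x x = I x" using O3c by auto
      have "I x \<noteq> e" using II[OF xP] Ie ne by metis
      moreover have "(I x, I x) \<in> D" "m (I x) (I x) = x" using ip[OF xx] eq by auto
      ultimately show "I x \<in> O3 P D m e \<and> I (I x) = x" using O3c Iprop xP II by auto
    qed
    have nofix: "{x\<in>O3 P D m e. I x = x} = {}"
    proof -
      { fix x assume x: "x \<in> O3 P D m e" "I x = x"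
        then have "m x x = x" using O3c by auto
        then have False using x unfolding O3_def by auto }
      then show ?thesis by auto
    qed
    show ?thesis using inv2_cong[OF finO invO] nofix unfolding k_def o3_def by simp
  qed
  define rh where "rh = (\<lambda>p. (snd p, I (m (fst p) (snd p))))"
  have rh_inv: "\<forall>p\<in>D. rh p \<in> D \<and> rh (rh (rh p)) = p"
  proof
    fix p assume p: "p \<in> D"
    obtain x y where xy: "p = (x,y)" by fastforce
    have xyD: "(x,y) \<in> D" using p xy by simp
    define z where "z = I (m x y)"
    have 1: "(y, z) \<in> D" "m y z = I x" using Lrot[OF xyD] z_def by auto
    have xP: "x \<in> P" "y \<in> P" using xyD DP by auto
    have 2: "(z, I (m y z)) \<in> D" "m z (I (m y z)) = I y" using Lrot[OF 1(1)] by auto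
    then have 3: "(z, x) \<in> D" "m z x = I y" using 1 II xP by auto
    show "rh p \<in> D \<and> rh (rh (rh p)) = p"
      unfolding rh_def using xy 1 3 II xP z_def Lrot[OF xyD] by auto
  qed
  have rh_fix: "{p\<in>D. rh p = p} = (\<lambda>x. (x, x)) ` insert e (O3 P D m e)"
  proof (intro set_eqI iffI)
    fix p assume p: "p \<in> {p\<in>D. rh p = p}"
    obtain x y where xy: "p = (x,y)" by fastforce
    have yx: "y = x" and eqI: "I (m x x) = x" and xxD: "(x,x) \<in> D" using p xy unfolding rh_def by auto
    have xP: "x \<in> P" using xxD DP by auto
    have "m x x = I x" using II[OF mP[OF xxD]] eqI by metis
    then have "x = e \<or> x \<in> O3 P D m e" using O3c xP xxD by auto
    then show "p \<in> (\<lambda>x. (x, x)) ` insert e (O3 P D m e)" using xy yx by auto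
  next
    fix p assume "p \<in> (\<lambda>x. (x, x)) ` insert e (O3 P D m e)"
    then obtain x where x: "x = e \<or> x \<in> O3 P D m e" and px: "p = (x, x)" by auto
    show "p \<in> {p\<in>D. rh p = p}"
      using x
    proof
      assume "x = e" then show ?thesis using px unit[OF eP] Ie unfolding rh_def by auto
    next
      assume xo: "x \<in> O3 P D m e"
      then have "x \<in> P" "(x,x) \<in> D" "m x x = I x" using O3c by auto
      then show ?thesis using px II unfolding rh_def by auto
    qed
  qed
  have mod3: "[d = k + 1] (mod 3)"
  proof -
    have finO: "finite (O3 P D m e)" using assms(2) unfolding O3_def by auto
    have eO: "e \<notin> O3 P D m e" unfolding O3_def by auto
    have "card ((\<lambda>x. (x, x)) ` insert e (O3 P D m e)) = k + 1"
      unfolding k_def o3_def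
      by (subst card_image) (auto simp: inj_on_def finO eO)
    then show ?thesis unfolding d_def using inv3_cong[OF finD rh_inv] rh_fix by simp
  qed
  have nn: "int (n * n - d) = int n * int n - int d" using dle by (simp add: of_nat_diff)
  have e2: "(int n - 1) * (int n - 2) = int n * int n - 3 * int n + 2" by (simp add: algebra_simps)
  define N where "N = int n * int n"
  have "(N - int d) mod 6 = (N - 3 * int n + 2 - int k) mod 6"
    by (rule A4[OF A1[OF mod2] A2[OF mod3] A3[OF keven]])
  then show ?thesis
    unfolding n_def[symmetric] k_def[symmetric] gapcard nn e2 N_def[symmetric] cong_def by simp
qed

end
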